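(* The semantics $\mathit{cf1.5}$ and $\mathit{stg1.5}$ satisfy finitary directionality: for $\sigma\in\{\mathit{cf1.5},\mathit{stg1.5}\}$, whenever $\mathcal{F}$ is a finitary argumentation framework and $U\subseteq A_{\mathcal{F}}$ is not attacked from outside $U$, we have $\sigma(\mathcal{F}|_U)=\{S\cap U:S\in\sigma(\mathcal{F})\}$.
   Context: An argumentation framework (AF) is $\mathcal{F}=(A_{\mathcal{F}},R_{\mathcal{F}})$ with $R_{\mathcal{F}}\subseteq A_{\mathcal{F}}\times A_{\mathcal{F}}$; $a\rightarrow b$ means $(a,b)\in R_{\mathcal{F}}$. $\mathcal{F}$ is finitary if each argument has finitely many attackers. $U$ is not attacked from outside $U$ if there are no $a\in A_{\mathcal{F}}\setminus U$, $b\in U$ with $a\rightarrow b$. $\mathcal{F}|_S=(A_{\mathcal{F}}\cap S,R_{\mathcal{F}}\cap(S\times S))$. Conflict-free: no $a,b\in S$ with $a\rightarrow b$; naive = $\subseteq$-maximal conflict-free; $S^\oplus=S\cup\{x:\exists y\in S,\ y\rightarrow x\}$; stage = conflict-free $S$ with no conflict-free $T$ such that $S^\oplus\subsetneq T^\oplus$. $\mathrm{SCC}(\mathcal{F})$: strongly connected components of the attack graph. $D_S(X)=\{b\in X:\exists a\in S\setminus X,\ a\rightarrow b\}$. $S\in\mathit{cf1.5}(\mathcal{F})$ (resp. $\mathit{stg1.5}(\mathcal{F})$) iff $S$ is conflict-free and for each $X\in\mathrm{SCC}(\mathcal{F})$, $S\cap X$ is a naive (resp. stage) extension of $\mathcal{F}|_{X\setminus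 D_S(X)}$. *)

theory Defs
  imports Main
begin

text \<open>An argumentation framework is given by a set of arguments A and an attack
relation R (with R \<subseteq> A \<times> A, assumed in the theorem).\<close>

definition finitary :: "'a set \<Rightarrow> ('a \<times> 'a) set \<Rightarrow> bool" where
  "finitary A R \<longleftrightarrow> (\<forall>b\<in>A. finite {a. (a, b) \<in> R})"

definition unattacked :: "'a set \<Rightarrow> ('a \<times> 'a) set \<Rightarrow> 'a set \<Rightarrow> bool" where
  "unattacked A R U \<longleftrightarrow> \<not> (\<exists>a\<in>A - U. \<exists>b\<in>U. (a, b) \<in> R)"

definition conflict_free :: "'a set \<Rightarrow> ('a \<times> 'a) set \<Rightarrow> 'a set \<Rightarrow> bool" where
  "conflict_free A R S \<longleftrightarrow> S \<subseteq> A \<and> \<not> (\<exists>a\<in>S. \<exists>b\<in>S. (a, b) \<in> R)"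

definition naive :: "'a set \<Rightarrow> ('a \<times> 'a) set \<Rightarrow> 'a set \<Rightarrow> bool" where
  "naive A R S \<longleftrightarrow> conflict_free A R S \<and> \<not> (\<exists>T. conflict_free A R T \<and> S \<subset> T)"

definition range_plus :: "('a \<times> 'a) set \<Rightarrow> 'a set \<Rightarrow> 'a set" where
  "range_plus R S = S \<union> {x. \<exists>y\<in>S. (y, x) \<in> R}"

definition stage :: "'a set \<Rightarrow> ('a \<times> 'a) set \<Rightarrow> 'a set \<Rightarrow> bool" where
  "stage A R S \<longleftrightarrow> conflict_free A R S \<and>
     \<not> (\<exists>T. conflict_free A R T \<and> range_plus R S \<subset> range_plus R T)"

definition SCCs :: "'a set \<Rightarrow> ('a \<times> 'a) set \<Rightarrow> 'a set set" where
  "SCCs A R = {X. \<exists>a\<in>A. X = {b\<in>A. (a, b) \<in> R\<^sup>* \<and> (b, a) \<in> R\<^sup>*}}"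

definition D_set :: "('a \<times> 'a) set \<Rightarrow> 'a set \<Rightarrow> 'a set \<Rightarrow> 'a set" where
  "D_set R S X = {b\<in>X. \<exists>a\<in>S - X. (a, b) \<in> R}"

definition cf15 :: "'a set \<Rightarrow> ('a \<times> 'a) set \<Rightarrow> 'a set \<Rightarrow> bool" where
  "cf15 A R S \<longleftrightarrow> conflict_free A R S \<and>
     (\<forall>X\<in>SCCs A R. let Y = X - D_set R S X in
        naive (A \<inter> Y) (R \<inter> (Y \<times> Y)) (S \<inter> X))"

definition stg15 :: "'a set \<Rightarrow> ('a \<times> 'a) set \<Rightarrow> 'a set \<Rightarrow> bool" where
  "stg15 A R S \<longleftrightarrow> conflict_free A R S \<and>
     (\<forall>X\<in>SCCs A R. let Y = X - D_set R S X in
        stage (A \<inter> Y) (R \<inter> (Y \<times> Y)) (S \<inter> X))"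

end

theory Submission imports Defs "HOL-Library.Countable_Set" begin

definition extp :: "('a \<times> bool) set \<Rightarrow> 'a set \<Rightarrow> bool" where
  "extp p S \<longleftrightarrow> (\<forall>a v. (a, v) \<in> p \<longrightarrow> (a \<in> S \<longleftrightarrow> v))"

lemma compactness:
  fixes P :: "'k \<Rightarrow> 'a set \<Rightarrow> bool" and V :: "'k \<Rightarrow> 'a set"
  assumes fin: "\<And>k. k \<in> K \<Longrightarrow> finite (V k)"
    and loc: "\<And>k S S'. k \<in> K \<Longrightarrow> S \<inter> V k = S' \<inter> V k \<Longrightarrow> P k S = P k S'"
    and sat: "\<And>K0. finite K0 \<Longrightarrow> K0 \<subseteq> K \<Longrightarrow> \<exists>S. \<forall>k\<in>K0. P k S"
  shows "\<exists>S. \<forall>k\<in>K. P k S"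
proof -
  define Good where "Good p \<longleftrightarrow> (\<forall>a. \<not> ((a, True) \<in> p \<and> (a, False) \<in> p)) \<and>
     (\<forall>K0. finite K0 \<and> K0 \<subseteq> K \<longrightarrow> (\<exists>S. extp p S \<and> (\<forall>k\<in>K0. P k S)))" for p
  have G0: "Good {}" unfolding Good_def extp_def using sat by auto
  have "\<exists>M\<in>Collect Good. \<forall>X\<in>Collect Good. M \<subseteq> X \<longrightarrow> X = M"
  proof (rule subset_Zorn')
    fix C assume ch: "subset.chain (Collect Good) C"
    show "\<Union>C \<in> Collect Good"
    proof (cases "C = {}")
      case True then show ?thesis using G0 by simp
    next
      case False
      have chs: "\<And>X Y. X \<in> C \<Longrightarrow> Y \<in> C \<Longrightarrow> X \<subseteq> Y \<or> Y \<subseteq> X" and CG: "C \<subseteq> Collect Good"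
        using ch by (auto simp: subset_chain_def)
      have func: "\<forall>a. \<not> ((a, True) \<in> \<Union>C \<and> (a, False) \<in> \<Union>C)"
      proof (intro allI notI)
        fix a assume "(a, True) \<in> \<Union>C \<and> (a, False) \<in> \<Union>C"
        then obtain X Y where "X \<in> C" "Y \<in> C" "(a,True) \<in> X" "(a,False) \<in> Y" by auto
        then show False using chs[of X Y] CG unfolding Good_def by auto
      qed
      have "\<exists>S. extp (\<Union>C) S \<and> (\<forall>k\<in>K0. P k S)" if fK0: "finite K0" "K0 \<subseteq> K" for K0
      proof -
        define W where "W = \<Union>(V ` K0)"
        have fW: "finite W" unfolding W_def using fK0 fin by auto
        define Q where "Q = {(a, v). (a, v) \<in> \<Union>C \<and> a \<in> W}"
        have "Q \<subseteq> W \<times> UNIV" unfolding Q_def by auto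
        then have fQ: "finite Q" using fW by (meson finite_SigmaI finite_UNIV finite_subset)
        obtain B where B: "B \<in> C" "Q \<subseteq> B"
          using finite_subset_Union_chain[OF fQ _ False ch] unfolding Q_def by auto
        then have "Good B" using CG by auto
        then obtain S0 where S0: "extp B S0" "\<forall>k\<in>K0. P k S0" unfolding Good_def using fK0 by blast
        define S where "S = (S0 \<inter> W) \<union> {a. a \<notin> W \<and> (a, True) \<in> \<Union>C}"
        have "P k S" if "k \<in> K0" for k
        proof -
          have "V k \<subseteq> W" unfolding W_def using that by auto
          then have "S \<inter> V k = S0 \<inter> V k" unfolding S_def by auto
          then show ?thesis using loc[of k S S0] that \<open>K0 \<subseteq> K\<close> S0(2) by auto
        qed
        moreover have "extp (\<Union>C) S"
          unfolding extp_def
        proof (intro allI impI)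
          fix a v assume av: "(a, v) \<in> \<Union>C"
          show "(a \<in> S) = v"
          proof (cases "a \<in> W")
            case True
            then have "(a, v) \<in> B" using av B unfolding Q_def by auto
            then show ?thesis using S0(1) True unfolding extp_def S_def by auto
          next
            case False
            then show ?thesis using av func unfolding S_def by (cases v) auto
          qed
        qed
        ultimately show ?thesis by blast
      qed
      then show ?thesis using func unfolding Good_def by auto
    qed
  qed
  then obtain M where GM: "Good M" and maxM: "\<And>X. Good X \<Longrightarrow> M \<subseteq> X \<Longrightarrow> X = M" by auto
  have tot: "(a, True) \<in> M \<or> (a, False) \<in> M" for a
  proof (rule ccontr)
    assume na: "\<not> ((a, True) \<in> M \<or> (a, False) \<in> M)"
    have notgood: "\<exists>K0. finite K0 \<and> K0 \<subseteq> K \<and> \<not> (\<exists>S. extp (insert (a, v) M) S \<and> (\<forall>k\<in>K0. P k S))" for v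
    proof -
      have "insert (a, v) M \<noteq> M" using na by (cases v) auto
      then have "\<not> Good (insert (a, v) M)" using maxM[of "insert (a,v) M"] by auto
      moreover have "\<forall>b. \<not> ((b, True) \<in> insert (a, v) M \<and> (b, False) \<in> insert (a, v) M)"
        using GM na unfolding Good_def by (cases v) auto
      ultimately show ?thesis unfolding Good_def by auto
    qed
    obtain K1 where K1: "finite K1" "K1 \<subseteq> K" "\<not> (\<exists>S. extp (insert (a, True) M) S \<and> (\<forall>k\<in>K1. P k S))"
      using notgood[of True] by blast
    obtain K2 where K2: "finite K2" "K2 \<subseteq> K" "\<not> (\<exists>S. extp (insert (a, False) M) S \<and> (\<forall>k\<in>K2. P k S))"
      using notgood[of False] by blast
    have "finite (K1 \<union> K2)" "K1 \<union> K2 \<subseteq> K" using K1 K2 by auto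
    then obtain S where S: "extp M S" "\<forall>k\<in>K1 \<union> K2. P k S"
      using GM unfolding Good_def by blast
    show False
    proof (cases "a \<in> S")
      case True
      then have "extp (insert (a, True) M) S" using S(1) unfolding extp_def by auto
      then show False using K1(3) S(2) by auto
    next
      case False
      then have "extp (insert (a, False) M) S" using S(1) unfolding extp_def by auto
      then show False using K2(3) S(2) by auto
    qed
  qed
  define S where "S = {a. (a, True) \<in> M}"
  have "P k S" if "k \<in> K" for k
  proof -
    have "finite {k}" "{k} \<subseteq> K" using that by auto
    then obtain S0 where S0: "extp M S0" "P k S0" using GM unfolding Good_def by blast
    have "S0 = S"
    proof (intro set_eqI)
      fix a show "a \<in> S0 \<longleftrightarrow> a \<in> S"
      proof (cases "(a, True) \<in> M")
        case True then show ?thesis using S0(1) unfolding extp_def S_def by auto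
      next
        case False
        then have "(a, False) \<in> M" using tot[of a] by auto
        then show ?thesis using S0(1) False unfolding extp_def S_def by auto
      qed
    qed
    then show ?thesis using S0 by simp
  qed
  then show ?thesis by blast
qed

definition hh :: "bool \<Rightarrow> ('a \<times> 'a) set \<Rightarrow> 'a set \<Rightarrow> 'a set" where
  "hh b R' W = (if b then range_plus R' W else W)"

definition gmax :: "bool \<Rightarrow> 'a set \<Rightarrow> ('a \<times> 'a) set \<Rightarrow> 'a set \<Rightarrow> bool" where
  "gmax b A' R' S \<longleftrightarrow> conflict_free A' R' S \<and> \<not> (\<exists>T. conflict_free A' R' T \<and> hh b R' S \<subset> hh b R' T)"

definition gen15 :: "bool \<Rightarrow> 'a set \<Rightarrow> ('a \<times> 'a) set \<Rightarrow> 'a set \<Rightarrow> bool" where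
  "gen15 b A R S \<longleftrightarrow> conflict_free A R S \<and>
     (\<forall>X\<in>SCCs A R. let Y = X - D_set R S X in gmax b (A \<inter> Y) (R \<inter> (Y \<times> Y)) (S \<inter> X))"

lemma cf15_gen: "cf15 A R S = gen15 False A R S"
  by (simp add: cf15_def gen15_def gmax_def naive_def hh_def)

lemma stg15_gen: "stg15 A R S = gen15 True A R S"
  by (simp add: stg15_def gen15_def gmax_def stage_def hh_def)

definition beats :: "('a \<Rightarrow> nat) \<Rightarrow> 'a set \<Rightarrow> 'a set \<Rightarrow> 'a set \<Rightarrow> 'a \<Rightarrow> bool" where
  "beats e X P Q x \<longleftrightarrow> x \<in> X \<and> x \<in> P \<and> x \<notin> Q \<and> (\<forall>y\<in>X. e y < e x \<longrightarrow> (y \<in> P \<longleftrightarrow> y \<in> Q))"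

lemma beats_irrefl: "\<not> beats e X P P x"
  unfolding beats_def by auto

lemma beats_trans:
  assumes inj: "inj_on e X" and b1: "beats e X P Q p" and b2: "beats e X Q W q"
  shows "\<exists>z. beats e X P W z"
proof -
  have p: "p \<in> X" "p \<in> P" "p \<notin> Q" "\<And>y. y \<in> X \<Longrightarrow> e y < e p \<Longrightarrow> (y \<in> P \<longleftrightarrow> y \<in> Q)"
    using b1 unfolding beats_def by auto
  have q: "q \<in> X" "q \<in> Q" "q \<notin> W" "\<And>y. y \<in> X \<Longrightarrow> e y < e q \<Longrightarrow> (y \<in> Q \<longleftrightarrow> y \<in> W)"
    using b2 unfolding beats_def by auto
  consider "e p < e q" | "e q < e p" | "e p = e q" by linarith
  then show ?thesis
  proof cases
    case 1
    have "p \<notin> W" using q(4)[OF p(1) 1] p(3) by simp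
    moreover have "y \<in> P \<longleftrightarrow> y \<in> W" if "y \<in> X" "e y < e p" for y
      using p(4)[OF that] q(4)[OF that(1)] that(2) 1 by simp
    ultimately have "beats e X P W p" using p unfolding beats_def by auto
    then show ?thesis by blast
  next
    case 2
    have "q \<in> P" using p(4)[OF q(1) 2] q(2) by simp
    moreover have "y \<in> P \<longleftrightarrow> y \<in> W" if "y \<in> X" "e y < e q" for y
      using p(4)[OF that(1)] q(4)[OF that] that(2) 2 by simp
    ultimately have "beats e X P W q" using q unfolding beats_def by auto
    then show ?thesis by blast
  next
    case 3
    then have "p = q" using inj p(1) q(1) unfolding inj_on_def by auto
    then show ?thesis using p(3) q(2) by simp
  qed
qed

lemma beats_best:
  assumes "finite F" "F \<noteq> {}" "inj_on e X"
  shows "\<exists>C\<in>F. \<forall>W\<in>F. \<forall>x. \<not> beats e X (g W) (g C) x"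
  using assms(1,2)
proof (induction F rule: finite_ne_induct)
  case (singleton W) then show ?case by (simp add: beats_irrefl)
next
  case (insert W F)
  then obtain C where C: "C \<in> F" "\<forall>W\<in>F. \<forall>x. \<not> beats e X (g W) (g C) x" by auto
  show ?case
  proof (cases "\<exists>x. beats e X (g W) (g C) x")
    case True
    have "\<forall>W'\<in>insert W F. \<forall>x. \<not> beats e X (g W') (g W) x"
    proof (intro ballI allI notI)
      fix W' x assume W': "W' \<in> insert W F" and bx: "beats e X (g W') (g W) x"
      show False
      proof (cases "W' = W")
        case True then show False using bx beats_irrefl by metis
      next
        case False
        then have "W' \<in> F" using W' by auto
        obtain y where y: "beats e X (g W) (g C) y" using True by auto
        obtain z where "beats e X (g W') (g C) z" using beats_trans[OF assms(3) bx y] by blast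
        then show False using C(2) \<open>W' \<in> F\<close> by blast
      qed
    qed
    then show ?thesis by blast
  next
    case False
    then show ?thesis using C by blast
  qed
qed

type_synonym 'a cstr = "('a \<times> 'a) + ('a + ('a + ('a set \<times> 'a set \<times> 'a)))"
abbreviation CF :: "'a \<Rightarrow> 'a \<Rightarrow> 'a cstr" where "CF x y \<equiv> Inl (x, y)"
abbreviation InA :: "'a \<Rightarrow> 'a cstr" where "InA x \<equiv> Inr (Inl x)"
abbreviation InU :: "'a \<Rightarrow> 'a cstr" where "InU x \<equiv> Inr (Inr (Inl x))"
abbreviation Lex :: "'a set \<Rightarrow> 'a set \<Rightarrow> 'a \<Rightarrow> 'a cstr" where "Lex X T x \<equiv> Inr (Inr (Inr (X, T, x)))"

lemma beats_cong:
  assumes "\<And>z. z \<in> X \<Longrightarrow> e z \<le> e x \<Longrightarrow> (z \<in> P1 \<longleftrightarrow> z \<in> P2) \<and> (z \<in> Q1 \<longleftrightarrow> z \<in> Q2)"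
  shows "beats e X P1 Q1 x = beats e X P2 Q2 x"
proof -
  have "\<And>z. z \<in> X \<Longrightarrow> e z < e x \<Longrightarrow> (z \<in> P1 \<longleftrightarrow> z \<in> P2) \<and> (z \<in> Q1 \<longleftrightarrow> z \<in> Q2)"
    using assms by (simp add: less_imp_le)
  then show ?thesis unfolding beats_def using assms[of x] by blast
qed

locale AFU =
  fixes A :: "'a set" and R :: "('a \<times> 'a) set" and U :: "'a set"
  assumes RA: "R \<subseteq> A \<times> A" and fin: "finitary A R" and UA: "U \<subseteq> A" and una: "unattacked A R U"
begin

definition att :: "'a \<Rightarrow> 'a set" where "att z = {a. (a, z) \<in> R}"

lemma finite_att: "finite (att z)"
proof (cases "z \<in> A")
  case True then show ?thesis using fin unfolding finitary_def att_def by auto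
next
  case False then have "att z = {}" using RA unfolding att_def by auto
  then show ?thesis by simp
qed

lemma att_U: "(a, b) \<in> R \<Longrightarrow> b \<in> U \<Longrightarrow> a \<in> U"
  using una RA unfolding unattacked_def by blast

definition scc :: "'a \<Rightarrow> 'a set" where "scc x = {b\<in>A. (x, b) \<in> R\<^sup>* \<and> (b, x) \<in> R\<^sup>*}"

lemma SCCs_scc: "SCCs A R = scc ` A"
  unfolding SCCs_def scc_def by auto

lemma scc_self: "x \<in> A \<Longrightarrow> x \<in> scc x" unfolding scc_def by auto

lemma scc_eq: "x \<in> scc a \<Longrightarrow> scc x = scc a"
  unfolding scc_def by (auto intro: rtrancl_trans)

lemma SCC_eq: "X \<in> SCCs A R \<Longrightarrow> x \<in> X \<Longrightarrow> X = scc x"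
  unfolding SCCs_scc using scc_eq by auto

lemma SCC_sub: "X \<in> SCCs A R \<Longrightarrow> X \<subseteq> A"
  unfolding SCCs_scc scc_def by auto

lemma SCC_disj: "X \<in> SCCs A R \<Longrightarrow> X' \<in> SCCs A R \<Longrightarrow> x \<in> X \<Longrightarrow> x \<in> X' \<Longrightarrow> X = X'"
  using SCC_eq by metis

lemma rt_U: "(a, b) \<in> R\<^sup>* \<Longrightarrow> b \<in> U \<Longrightarrow> a \<in> U \<and> (a, b) \<in> (R \<inter> (U \<times> U))\<^sup>*"
proof (induction rule: converse_rtrancl_induct)
  case base then show ?case by simp
next
  case (step y z)
  then have "y \<in> U" using att_U by blast
  then show ?case using step by (meson IntI SigmaI converse_rtrancl_into_rtrancl)
qed

lemma scc_U: "a \<in> U \<Longrightarrow> scc a \<subseteq> U"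
  unfolding scc_def using rt_U by blast

lemma scc_restr: "a \<in> A \<inter> U \<Longrightarrow> {b\<in>A \<inter> U. (a, b) \<in> (R \<inter> (U \<times> U))\<^sup>* \<and> (b, a) \<in> (R \<inter> (U \<times> U))\<^sup>*} = scc a"
proof -
  assume a: "a \<in> A \<inter> U"
  have m: "(R \<inter> (U \<times> U))\<^sup>* \<subseteq> R\<^sup>*" by (simp add: rtrancl_mono)
  show ?thesis
  proof (intro set_eqI iffI)
    fix b assume "b \<in> {b\<in>A \<inter> U. (a, b) \<in> (R \<inter> (U \<times> U))\<^sup>* \<and> (b, a) \<in> (R \<inter> (U \<times> U))\<^sup>*}"
    then show "b \<in> scc a" using m unfolding scc_def by auto
  next
    fix b assume b: "b \<in> scc a"
    then have "b \<in> U" using scc_U a by auto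
    then show "b \<in> {b\<in>A \<inter> U. (a, b) \<in> (R \<inter> (U \<times> U))\<^sup>* \<and> (b, a) \<in> (R \<inter> (U \<times> U))\<^sup>*}"
      using b a rt_U unfolding scc_def by auto
  qed
qed

lemma SCCs_restr: "SCCs (A \<inter> U) (R \<inter> (U \<times> U)) = {X \<in> SCCs A R. X \<subseteq> U}"
proof -
  have "SCCs (A \<inter> U) (R \<inter> (U \<times> U)) = scc ` (A \<inter> U)"
    unfolding SCCs_def using scc_restr by auto
  also have "\<dots> = {X \<in> SCCs A R. X \<subseteq> U}"
  proof (intro set_eqI iffI)
    fix X assume "X \<in> scc ` (A \<inter> U)" then show "X \<in> {X \<in> SCCs A R. X \<subseteq> U}"
      unfolding SCCs_scc using scc_U by auto
  next
    fix X assume "X \<in> {X \<in> SCCs A R. X \<subseteq> U}"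
    then obtain a where "a \<in> A" "X = scc a" "X \<subseteq> U" unfolding SCCs_scc by auto
    then show "X \<in> scc ` (A \<inter> U)" using scc_self by auto
  qed
  finally show ?thesis .
qed

lemma SCC_U_cases: "X \<in> SCCs A R \<Longrightarrow> X \<subseteq> U \<or> X \<inter> U = {}"
  using SCC_eq scc_U by blast

lemma D_set_restr: "X \<subseteq> U \<Longrightarrow> S' \<subseteq> U \<Longrightarrow> (\<forall>u\<in>U. u \<in> S \<longleftrightarrow> u \<in> S') \<Longrightarrow>
   D_set (R \<inter> (U \<times> U)) S' X = D_set R S X"
  unfolding D_set_def using att_U by blast

lemma restrict:
  assumes "gen15 b A R S"
  shows "gen15 b (A \<inter> U) (R \<inter> (U \<times> U)) (S \<inter> U)"
proof -
  have cf: "conflict_free A R S" using assms unfolding gen15_def by auto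
  then have "conflict_free (A \<inter> U) (R \<inter> (U \<times> U)) (S \<inter> U)" unfolding conflict_free_def by auto
  moreover have "let Y = X - D_set (R \<inter> (U \<times> U)) (S \<inter> U) X in
     gmax b (A \<inter> U \<inter> Y) (R \<inter> (U \<times> U) \<inter> (Y \<times> Y)) (S \<inter> U \<inter> X)"
    if X: "X \<in> SCCs (A \<inter> U) (R \<inter> (U \<times> U))" for X
  proof -
    have X1: "X \<in> SCCs A R" "X \<subseteq> U" using X SCCs_restr by auto
    define Y where "Y = X - D_set R S X"
    have g: "gmax b (A \<inter> Y) (R \<inter> (Y \<times> Y)) (S \<inter> X)"
      using assms X1 unfolding gen15_def Y_def by (auto simp: Let_def)
    have "D_set (R \<inter> (U \<times> U)) (S \<inter> U) X = D_set R S X"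
      using D_set_restr[OF X1(2), of "S \<inter> U" S] by auto
    moreover have "A \<inter> U \<inter> Y = A \<inter> Y" "R \<inter> (U \<times> U) \<inter> (Y \<times> Y) = R \<inter> (Y \<times> Y)" "S \<inter> U \<inter> X = S \<inter> X"
      using X1 unfolding Y_def by auto
    ultimately show ?thesis using g unfolding Y_def by (simp add: Let_def)
  qed
  ultimately show ?thesis unfolding gen15_def by auto
qed


lemma countable_scc: "countable (scc x)"
proof -
  define L where "L n = {b. (b, x) \<in> R ^^ n}" for n
  have fL: "finite (L n)" for n
  proof (induction n)
    case 0 then show ?case unfolding L_def by simp
  next
    case (Suc n)
    have "L (Suc n) \<subseteq> (\<Union>c\<in>L n. att c)"
      unfolding L_def att_def using relpow_Suc_D2 by fastforce
    then show ?case using Suc finite_att by (meson finite_UN_I finite_subset)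
  qed
  have "scc x \<subseteq> (\<Union>n. L n)" unfolding scc_def L_def using rtrancl_power by fastforce
  then show ?thesis using fL by (meson countable_UN countable_finite countable_subset UNIV_I countableI_type)
qed

lemma countable_SCC: "X \<in> SCCs A R \<Longrightarrow> countable X"
  unfolding SCCs_scc using countable_scc by auto


definition Yf :: "'a set \<Rightarrow> 'a set \<Rightarrow> 'a set" where "Yf X S = X - D_set R S X"
definition HH :: "bool \<Rightarrow> 'a set \<Rightarrow> 'a set \<Rightarrow> 'a set \<Rightarrow> 'a set" where
  "HH b X S W = hh b (R \<inter> (Yf X S \<times> Yf X S)) W"
definition cfree :: "'a set \<Rightarrow> bool" where "cfree T \<longleftrightarrow> (\<forall>x\<in>T. \<forall>y\<in>T. (x, y) \<notin> R)"
definition en :: "'a set \<Rightarrow> 'a \<Rightarrow> nat" where "en X = to_nat_on X"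
definition Zs :: "'a set \<Rightarrow> 'a \<Rightarrow> 'a set" where "Zs X x = {y\<in>X. en X y \<le> en X x}"
definition Vz :: "'a \<Rightarrow> 'a set" where "Vz z = {z} \<union> att z \<union> (\<Union>y\<in>att z. att y)"

definition PP :: "bool \<Rightarrow> 'a set \<Rightarrow> 'a cstr \<Rightarrow> 'a set \<Rightarrow> bool" where
  "PP b S' c S = (case c of Inl (x, y) \<Rightarrow> \<not> (x \<in> S \<and> y \<in> S)
     | Inr (Inl x) \<Rightarrow> (x \<in> S \<longrightarrow> x \<in> A)
     | Inr (Inr (Inl u)) \<Rightarrow> (u \<in> S \<longleftrightarrow> u \<in> S')
     | Inr (Inr (Inr (X, T, x))) \<Rightarrow> \<not> beats (en X) X (HH b X S (T \<inter> Yf X S)) (HH b X S (S \<inter> X)) x)"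

definition VV :: "'a cstr \<Rightarrow> 'a set" where
  "VV c = (case c of Inl (x, y) \<Rightarrow> {x, y}
     | Inr (Inl x) \<Rightarrow> {x}
     | Inr (Inr (Inl u)) \<Rightarrow> {u}
     | Inr (Inr (Inr (X, T, x))) \<Rightarrow> (\<Union>z\<in>Zs X x. Vz z))"

definition KK :: "'a cstr set" where
  "KK = {CF x y | x y. (x, y) \<in> R} \<union> range InA \<union> InU ` U \<union>
     {Lex X T x | X T x. X \<in> SCCs A R \<and> X \<inter> U = {} \<and> T \<subseteq> X \<and> cfree T \<and> x \<in> X}"

lemma memYf: "z \<in> Yf X S \<longleftrightarrow> z \<in> X \<and> (\<forall>a\<in>att z. a \<in> S \<longrightarrow> a \<in> X)"
  unfolding Yf_def D_set_def att_def by auto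

lemma memHH: "z \<in> HH b X S W \<longleftrightarrow> (z \<in> W \<or> (b \<and> (\<exists>y\<in>att z. y \<in> W \<and> y \<in> Yf X S \<and> z \<in> Yf X S)))"
  unfolding HH_def hh_def range_plus_def att_def by auto

lemma HH_sub: "W \<subseteq> Yf X S \<Longrightarrow> HH b X S W \<subseteq> Yf X S"
  using memHH by blast

lemma loc_z:
  assumes "S \<inter> Vz z = S2 \<inter> Vz z"
  shows "(z \<in> HH b X S (T \<inter> Yf X S)) = (z \<in> HH b X S2 (T \<inter> Yf X S2)) \<and>
         (z \<in> HH b X S (S \<inter> X)) = (z \<in> HH b X S2 (S2 \<inter> X))"
proof -
  have sz: "z \<in> S \<longleftrightarrow> z \<in> S2" using assms unfolding Vz_def by blast
  have sa: "\<And>a. a \<in> att z \<Longrightarrow> a \<in> S \<longleftrightarrow> a \<in> S2" using assms unfolding Vz_def by blast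
  have saa: "\<And>a y. y \<in> att z \<Longrightarrow> a \<in> att y \<Longrightarrow> a \<in> S \<longleftrightarrow> a \<in> S2" using assms unfolding Vz_def by blast
  have yz: "z \<in> Yf X S \<longleftrightarrow> z \<in> Yf X S2" unfolding memYf using sa by blast
  have yy: "\<And>y. y \<in> att z \<Longrightarrow> y \<in> Yf X S \<longleftrightarrow> y \<in> Yf X S2" unfolding memYf using saa by blast
  show ?thesis unfolding memHH using sz sa yz yy by auto
qed

lemma inj_en: "X \<in> SCCs A R \<Longrightarrow> inj_on (en X) X"
  unfolding en_def using countable_SCC by auto

lemma finite_Zs: "X \<in> SCCs A R \<Longrightarrow> finite (Zs X x)"
proof -
  assume X: "X \<in> SCCs A R"
  have "Zs X x = en X -` {..en X x} \<inter> X" unfolding Zs_def by auto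
  then show ?thesis using finite_vimage_IntI[OF _ inj_en[OF X]] by auto
qed

lemma finite_Vz: "finite (Vz z)"
  unfolding Vz_def using finite_att by auto

lemma VV_fin: "k \<in> KK \<Longrightarrow> finite (VV k)"
  unfolding KK_def VV_def using finite_Zs finite_Vz by auto

lemma PP_loc:
  assumes k: "k \<in> KK" and ag: "S \<inter> VV k = S2 \<inter> VV k"
  shows "PP b S' k S = PP b S' k S2"
proof -
  consider (a) x y where "k = CF x y" | (b) x where "k = InA x" | (c) u where "k = InU u"
    | (d) X T x where "k = Lex X T x" "X \<in> SCCs A R" "x \<in> X"
    using k unfolding KK_def by blast
  then show ?thesis
  proof cases
    case a then show ?thesis using ag unfolding PP_def VV_def by auto
  next
    case b then show ?thesis using ag unfolding PP_def VV_def by auto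
  next
    case c then show ?thesis using ag unfolding PP_def VV_def by auto
  next
    case d
    have "\<And>z. z \<in> X \<Longrightarrow> en X z \<le> en X x \<Longrightarrow>
       (z \<in> HH b X S (T \<inter> Yf X S)) = (z \<in> HH b X S2 (T \<inter> Yf X S2)) \<and>
       (z \<in> HH b X S (S \<inter> X)) = (z \<in> HH b X S2 (S2 \<inter> X))"
    proof -
      fix z assume "z \<in> X" "en X z \<le> en X x"
      then have "z \<in> Zs X x" unfolding Zs_def by auto
      then have "Vz z \<subseteq> VV k" unfolding d VV_def by auto
      then have "S \<inter> Vz z = S2 \<inter> Vz z" using ag by blast
      then show "(z \<in> HH b X S (T \<inter> Yf X S)) = (z \<in> HH b X S2 (T \<inter> Yf X S2)) \<and>
       (z \<in> HH b X S (S \<inter> X)) = (z \<in> HH b X S2 (S2 \<inter> X))" by (rule loc_z)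
    qed
    then have "beats (en X) X (HH b X S (T \<inter> Yf X S)) (HH b X S (S \<inter> X)) x =
               beats (en X) X (HH b X S2 (T \<inter> Yf X S2)) (HH b X S2 (S2 \<inter> X)) x"
      by (rule beats_cong)
    then show ?thesis unfolding d PP_def by simp
  qed
qed


lemma build:
  assumes cfS': "conflict_free A R S'" "S' \<subseteq> U"
    and cands: "\<And>X T. T \<in> Cands X \<Longrightarrow> T \<subseteq> X \<and> cfree T" "\<And>X. finite (Cands X)"
  shows "finite \<Phi> \<Longrightarrow> \<Phi> \<subseteq> {X \<in> SCCs A R. X \<inter> U = {}} \<Longrightarrow>
    \<exists>S. conflict_free A R S \<and> S \<inter> U = S' \<and> S \<subseteq> U \<union> \<Union>\<Phi> \<and>
      (\<forall>X\<in>\<Phi>. \<forall>T\<in>Cands X. \<forall>x. \<not> beats (en X) X (HH b X S (T \<inter> Yf X S)) (HH b X S (S \<inter> X)) x)"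
proof (induction "card \<Phi>" arbitrary: \<Phi> rule: less_induct)
  case less
  show ?case
  proof (cases "\<Phi> = {}")
    case True
    have "S' \<inter> U = S'" using cfS' by auto
    then show ?thesis using True cfS' by auto
  next
    case False
    define anc where "anc X = {y. \<exists>x\<in>X. (y, x) \<in> R\<^sup>*}" for X
    have fa: "finite (anc ` \<Phi>)" using less.prems(1) by simp
    have ne: "anc ` \<Phi> \<noteq> {}" using False by simp
    obtain m where m: "m \<in> anc ` \<Phi>" "\<And>b. b \<in> anc ` \<Phi> \<Longrightarrow> m \<subseteq> b \<Longrightarrow> m = b"
      using finite_has_maximal[OF fa ne] by metis
    obtain X where X: "X \<in> \<Phi>" and mX: "m = anc X" using m(1) by (rule imageE) simp
    have mx: "anc X = anc X'" if "X' \<in> \<Phi>" "anc X \<subseteq> anc X'" for X'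
      using m(2)[of "anc X'"] that mX by simp
    have XS: "X \<in> SCCs A R" "X \<inter> U = {}" using less.prems X by auto
    have down: "X' = X" if a: "X' \<in> \<Phi>" "x \<in> X" "x' \<in> X'" "(x, x') \<in> R" for X' x x'
    proof -
      have X'S: "X' \<in> SCCs A R" using a less.prems by auto
      have Xx: "X = scc x" using SCC_eq XS a by auto
      have "anc X \<subseteq> anc X'"
      proof
        fix y assume "y \<in> anc X"
        then obtain x0 where "x0 \<in> X" "(y, x0) \<in> R\<^sup>*" unfolding anc_def by auto
        moreover have "(x0, x) \<in> R\<^sup>*" using \<open>x0 \<in> X\<close> Xx unfolding scc_def by auto
        ultimately have "(y, x') \<in> R\<^sup>*" using a(4) by (meson rtrancl.rtrancl_into_rtrancl rtrancl_trans)
        then show "y \<in> anc X'" unfolding anc_def using a(3) by auto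
      qed
      then have "anc X = anc X'" using mx a(1) by auto
      moreover have "x' \<in> anc X'" unfolding anc_def using a(3) by auto
      ultimately obtain x0 where "x0 \<in> X" "(x', x0) \<in> R\<^sup>*" unfolding anc_def by auto
      moreover have "(x0, x) \<in> R\<^sup>*" using \<open>x0 \<in> X\<close> Xx unfolding scc_def by auto
      ultimately have "(x', x) \<in> R\<^sup>*" by (meson rtrancl_trans)
      moreover have "x' \<in> A" using a(4) RA by auto
      ultimately have "x' \<in> scc x" unfolding scc_def using a(4) by auto
      then show "X' = X" using SCC_disj[OF X'S XS(1)] a(3) Xx by auto
    qed
    define \<Phi>0 where "\<Phi>0 = \<Phi> - {X}"
    have c0: "card \<Phi>0 < card \<Phi>" unfolding \<Phi>0_def using card_Diff1_less[OF less.prems(1) X] .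
    have f0: "finite \<Phi>0" unfolding \<Phi>0_def using less.prems by auto
    have s0: "\<Phi>0 \<subseteq> {X \<in> SCCs A R. X \<inter> U = {}}" unfolding \<Phi>0_def using less.prems by auto
    have IH: "\<exists>S. conflict_free A R S \<and> S \<inter> U = S' \<and> S \<subseteq> U \<union> \<Union>\<Phi>0 \<and>
      (\<forall>X\<in>\<Phi>0. \<forall>T\<in>Cands X. \<forall>x. \<not> beats (en X) X (HH b X S (T \<inter> Yf X S)) (HH b X S (S \<inter> X)) x)"
      by (rule less.hyps[OF c0 f0 s0])
    then obtain S0 where S0: "conflict_free A R S0" "S0 \<inter> U = S'" "S0 \<subseteq> U \<union> \<Union>\<Phi>0"
      "\<forall>X\<in>\<Phi>0. \<forall>T\<in>Cands X. \<forall>x. \<not> beats (en X) X (HH b X S0 (T \<inter> Yf X S0)) (HH b X S0 (S0 \<inter> X)) x"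
      by (elim exE conjE) simp
    have disj: "X' \<inter> X = {}" if "X' \<in> \<Phi>0" for X'
    proof -
      have "X' \<in> SCCs A R" "X' \<noteq> X" using that less.prems unfolding \<Phi>0_def by auto
      then show ?thesis using SCC_disj XS(1) by blast
    qed
    have S0X: "S0 \<inter> X = {}" using S0(3) XS(2) disj by blast
    define Y where "Y = Yf X S0"
    define W where "W = insert {} ((\<lambda>T. T \<inter> Y) ` Cands X)"
    have "finite W" "W \<noteq> {}" unfolding W_def using cands(2) by auto
    then obtain C where C: "C \<in> W" "\<forall>V\<in>W. \<forall>x. \<not> beats (en X) X (HH b X S0 V) (HH b X S0 C) x"
      using beats_best[OF _ _ inj_en[OF XS(1)], of W "HH b X S0"] by blast
    have YX: "Y \<subseteq> X" unfolding Y_def Yf_def by auto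
    have CY: "C \<subseteq> Y" "cfree C" using C(1) cands(1) unfolding W_def cfree_def by auto
    have CX: "C \<subseteq> X" using CY YX by auto
    define S where "S = S0 \<union> C"
    have YfX: "Yf X S = Y"
    proof -
      have "S - X = S0 - X" unfolding S_def using CX by auto
      then show ?thesis unfolding Y_def Yf_def D_set_def by simp
    qed
    have SX: "S \<inter> X = C" unfolding S_def using S0X CX by auto
    have other: "Yf X' S = Yf X' S0 \<and> S \<inter> X' = S0 \<inter> X'" if X': "X' \<in> \<Phi>0" for X'
    proof -
      have CX': "C \<inter> X' = {}" using CX disj[OF X'] by auto
      have "D_set R S X' = D_set R S0 X'"
      proof -
        have "\<not> (a \<in> C \<and> b \<in> X' \<and> (a, b) \<in> R)" for a b
          using down[of X' a b] X' CX unfolding \<Phi>0_def by auto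
        then show ?thesis unfolding D_set_def S_def by blast
      qed
      then show ?thesis unfolding Yf_def S_def using CX' by auto
    qed
    have cfS: "conflict_free A R S"
    proof -
      have "S \<subseteq> A" unfolding S_def using S0(1) CX SCC_sub[OF XS(1)] unfolding conflict_free_def by auto
      moreover have "(a, c) \<notin> R" if ac: "a \<in> S" "c \<in> S" for a c
      proof
        assume r: "(a, c) \<in> R"
        consider "a \<in> S0" "c \<in> S0" | "a \<in> C" "c \<in> C" | "a \<in> S0" "c \<in> C" | "a \<in> C" "c \<in> S0"
          using ac unfolding S_def by auto
        then show False
        proof cases
          case 1 then show False using S0(1) r unfolding conflict_free_def by auto
        next
          case 2 then show False using CY(2) r unfolding cfree_def by auto
        next
          case 3
          then have "a \<notin> X" using S0X by auto
          then have "c \<in> D_set R S0 X" using 3 r CX unfolding D_set_def by auto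
          then show False using 3 CY(1) unfolding Y_def Yf_def by auto
        next
          case 4
          show False
          proof (cases "c \<in> U")
            case True
            then have "a \<in> U" using att_U r by auto
            then show False using 4 CX XS(2) by auto
          next
            case False
            then obtain X' where "X' \<in> \<Phi>0" "c \<in> X'" using 4 S0(3) by auto
            then show False using down[of X' a c] 4 CX r unfolding \<Phi>0_def by auto
          qed
        qed
      qed
      ultimately show ?thesis unfolding conflict_free_def by auto
    qed
    have SU: "S \<inter> U = S'" unfolding S_def using S0(2) CX XS(2) by auto
    have Ssub: "S \<subseteq> U \<union> \<Union>\<Phi>" unfolding S_def using S0(3) CX X unfolding \<Phi>0_def by auto
    have good: "\<forall>T\<in>Cands X'. \<forall>x. \<not> beats (en X') X' (HH b X' S (T \<inter> Yf X' S)) (HH b X' S (S \<inter> X')) x"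
      if "X' \<in> \<Phi>" for X'
    proof (cases "X' = X")
      case True
      have HHe: "HH b X S V = HH b X S0 V" for V unfolding HH_def YfX Y_def by simp
      show ?thesis
      proof (intro ballI allI)
        fix T x assume "T \<in> Cands X'"
        then have "T \<inter> Y \<in> W" unfolding W_def True by auto
        then show "\<not> beats (en X') X' (HH b X' S (T \<inter> Yf X' S)) (HH b X' S (S \<inter> X')) x"
          using C(2) unfolding True HHe SX YfX by blast
      qed
    next
      case False
      then have X': "X' \<in> \<Phi>0" unfolding \<Phi>0_def using that by auto
      have HHe: "HH b X' S V = HH b X' S0 V" for V unfolding HH_def using other[OF X'] by simp
      show ?thesis using S0(4) X' other[OF X'] unfolding HHe by simp
    qed
    show ?thesis using cfS SU Ssub good by blast
  qed
qed


lemma extend: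
  assumes g: "gen15 b (A \<inter> U) (R \<inter> (U \<times> U)) S'"
  shows "\<exists>S. gen15 b A R S \<and> S \<inter> U = S'"
proof -
  have cf0: "conflict_free (A \<inter> U) (R \<inter> (U \<times> U)) S'" using g unfolding gen15_def by auto
  then have S'U: "S' \<subseteq> U" unfolding conflict_free_def by auto
  have cfS': "conflict_free A R S'" using cf0 S'U unfolding conflict_free_def by blast
  have "\<exists>S. \<forall>k\<in>KK. PP b S' k S"
  proof (rule compactness[where V = VV])
    show "\<And>k. k \<in> KK \<Longrightarrow> finite (VV k)" by (rule VV_fin)
    show "\<And>k S S2. k \<in> KK \<Longrightarrow> S \<inter> VV k = S2 \<inter> VV k \<Longrightarrow> PP b S' k S = PP b S' k S2"
      by (rule PP_loc)
  next
    fix K0 assume fK0: "finite K0" and K0: "K0 \<subseteq> KK"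
    define P0 where "P0 = (\<lambda>p. Inr (Inr (Inr p))) -` K0"
    have fP0: "finite P0" unfolding P0_def using fK0 by (rule finite_vimageI) (simp add: inj_def)
    define \<Phi> where "\<Phi> = fst ` P0"
    define Cands where "Cands X = (fst \<circ> snd) ` {p \<in> P0. fst p = X}" for X
    have fPhi: "finite \<Phi>" unfolding \<Phi>_def using fP0 by simp
    have fC: "finite (Cands X)" for X unfolding Cands_def using fP0 by simp
    have P0K: "X \<in> SCCs A R \<and> X \<inter> U = {} \<and> T \<subseteq> X \<and> cfree T \<and> x \<in> X" if "(X, T, x) \<in> P0" for X T x
    proof -
      have "Lex X T x \<in> KK" using that K0 unfolding P0_def by auto
      then show ?thesis unfolding KK_def by auto
    qed
    have cC: "T \<subseteq> X \<and> cfree T" if "T \<in> Cands X" for X T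
      using that P0K unfolding Cands_def by force
    have sPhi: "\<Phi> \<subseteq> {X \<in> SCCs A R. X \<inter> U = {}}" unfolding \<Phi>_def using P0K by force
    obtain S where S: "conflict_free A R S" "S \<inter> U = S'" "S \<subseteq> U \<union> \<Union>\<Phi>"
      "\<forall>X\<in>\<Phi>. \<forall>T\<in>Cands X. \<forall>x. \<not> beats (en X) X (HH b X S (T \<inter> Yf X S)) (HH b X S (S \<inter> X)) x"
    proof -
      have "\<exists>S. conflict_free A R S \<and> S \<inter> U = S' \<and> S \<subseteq> U \<union> \<Union>\<Phi> \<and>
      (\<forall>X\<in>\<Phi>. \<forall>T\<in>Cands X. \<forall>x. \<not> beats (en X) X (HH b X S (T \<inter> Yf X S)) (HH b X S (S \<inter> X)) x)"
        apply (rule build[where Cands=Cands and b=b])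
             apply (rule cfS')
            apply (rule S'U)
           apply (erule cC)
          apply (rule fC)
         apply (rule fPhi)
        apply (rule sPhi)
        done
      then show ?thesis using that by (elim exE conjE) simp
    qed
    have "PP b S' k S" if "k \<in> K0" for k
    proof -
      have "k \<in> KK" using that K0 by auto
      then consider (a) x y where "k = CF x y" "(x, y) \<in> R" | (b) x where "k = InA x" | (c) u where "k = InU u" "u \<in> U"
        | (d) X T x where "k = Lex X T x"
        unfolding KK_def by blast
      then show ?thesis
      proof cases
        case a then show ?thesis using S(1) unfolding PP_def conflict_free_def by auto
      next
        case b then show ?thesis using S(1) unfolding PP_def conflict_free_def by auto
      next
        case c then show ?thesis using S(2) unfolding PP_def by auto
      next
        case d
        then have "(X, T, x) \<in> P0" unfolding P0_def using that by auto
        then have "X \<in> \<Phi>" "T \<in> Cands X" unfolding \<Phi>_def Cands_def by force+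
        then show ?thesis using S(4) unfolding PP_def d by auto
      qed
    qed
    then show "\<exists>S. \<forall>k\<in>K0. PP b S' k S" by blast
  qed
  then obtain S where S: "\<And>k. k \<in> KK \<Longrightarrow> PP b S' k S" by blast
  have SA: "S \<subseteq> A"
  proof
    fix x assume "x \<in> S" then show "x \<in> A" using S[of "InA x"] unfolding KK_def PP_def by auto
  qed
  have Sno: "(x, y) \<notin> R" if "x \<in> S" "y \<in> S" for x y
    using S[of "CF x y"] that unfolding KK_def PP_def by auto
  have cfS: "conflict_free A R S" using SA Sno unfolding conflict_free_def by auto
  have SU: "S \<inter> U = S'"
  proof -
    have "u \<in> S \<longleftrightarrow> u \<in> S'" if "u \<in> U" for u
      using S[of "InU u"] that unfolding KK_def PP_def by auto
    then show ?thesis using S'U by auto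
  qed
  have "let Y = X - D_set R S X in gmax b (A \<inter> Y) (R \<inter> (Y \<times> Y)) (S \<inter> X)"
    if X: "X \<in> SCCs A R" for X
  proof (cases "X \<subseteq> U")
    case True
    then have X': "X \<in> SCCs (A \<inter> U) (R \<inter> (U \<times> U))" using SCCs_restr X by auto
    define Y where "Y = X - D_set R S X"
    have "D_set (R \<inter> (U \<times> U)) S' X = D_set R S X"
      using D_set_restr[OF True S'U, of S] SU by auto
    then have "gmax b (A \<inter> U \<inter> Y) (R \<inter> (U \<times> U) \<inter> (Y \<times> Y)) (S' \<inter> X)"
      using g X' unfolding gen15_def Y_def by (auto simp: Let_def)
    moreover have "A \<inter> U \<inter> Y = A \<inter> Y" "R \<inter> (U \<times> U) \<inter> (Y \<times> Y) = R \<inter> (Y \<times> Y)" "S' \<inter> X = S \<inter> X"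
      using True SU unfolding Y_def by auto
    ultimately show ?thesis unfolding Y_def by (simp add: Let_def)
  next
    case False
    then have XU: "X \<inter> U = {}" using SCC_U_cases X by auto
    define Y where "Y = Yf X S"
    have YX: "Y \<subseteq> X" unfolding Y_def Yf_def by auto
    have cfX: "conflict_free (A \<inter> Y) (R \<inter> (Y \<times> Y)) (S \<inter> X)"
    proof -
      have "S \<inter> X \<subseteq> Y" unfolding Y_def Yf_def D_set_def using Sno by auto
      then show ?thesis using SA Sno unfolding conflict_free_def by auto
    qed
    have nT: "\<not> (conflict_free (A \<inter> Y) (R \<inter> (Y \<times> Y)) T \<and> hh b (R \<inter> (Y \<times> Y)) (S \<inter> X) \<subset> hh b (R \<inter> (Y \<times> Y)) T)" for T
    proof
      assume a: "conflict_free (A \<inter> Y) (R \<inter> (Y \<times> Y)) T \<and> hh b (R \<inter> (Y \<times> Y)) (S \<inter> X) \<subset> hh b (R \<inter> (Y \<times> Y)) T"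
      have TY: "T \<subseteq> Y" using a unfolding conflict_free_def by auto
      have cT: "cfree T" using a TY unfolding conflict_free_def cfree_def by blast
      have sub: "HH b X S (S \<inter> X) \<subset> HH b X S T" using a unfolding HH_def Y_def by simp
      then obtain x0 where "x0 \<in> HH b X S T - HH b X S (S \<inter> X)" by blast
      then obtain x where x: "x \<in> HH b X S T - HH b X S (S \<inter> X)"
        and xm: "\<And>y. y \<in> HH b X S T - HH b X S (S \<inter> X) \<Longrightarrow> en X x \<le> en X y"
        using ex_has_least_nat[of "\<lambda>x. x \<in> HH b X S T - HH b X S (S \<inter> X)" x0 "en X"] by blast
      have "HH b X S T \<subseteq> Y" using HH_sub[of T X S b] TY unfolding Y_def by simp
      then have xX: "x \<in> X" using x YX by auto
      have TX: "T \<subseteq> X" using TY YX by (rule subset_trans)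
      have "Lex X T x \<in> {Lex X T x | X T x. X \<in> SCCs A R \<and> X \<inter> U = {} \<and> T \<subseteq> X \<and> cfree T \<and> x \<in> X}"
        using X XU TX cT xX by simp
      then have "Lex X T x \<in> KK" unfolding KK_def by (rule UnI2)
      then have nb: "\<not> beats (en X) X (HH b X S (T \<inter> Yf X S)) (HH b X S (S \<inter> X)) x"
        using S unfolding PP_def by fastforce
      have TYf: "T \<inter> Yf X S = T" using TY unfolding Y_def by auto
      have "beats (en X) X (HH b X S T) (HH b X S (S \<inter> X)) x"
        unfolding beats_def
      proof (intro conjI ballI impI)
        show "x \<in> X" by (rule xX)
        show "x \<in> HH b X S T" "x \<notin> HH b X S (S \<inter> X)" using x by auto
      next
        fix y assume "y \<in> X" "en X y < en X x"
        then show "(y \<in> HH b X S T) = (y \<in> HH b X S (S \<inter> X))" using xm[of y] sub by force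
      qed
      then show False using nb TYf by simp
    qed
    have "gmax b (A \<inter> Y) (R \<inter> (Y \<times> Y)) (S \<inter> X)" unfolding gmax_def using cfX nT by blast
    then show ?thesis unfolding Y_def Yf_def by (simp add: Let_def)
  qed
  then have "gen15 b A R S" using cfS unfolding gen15_def by blast
  then show ?thesis using SU by blast
qed

lemma directional:
  "{S. gen15 b (A \<inter> U) (R \<inter> (U \<times> U)) S} = (\<lambda>S. S \<inter> U) ` {S. gen15 b A R S}"
proof (intro set_eqI iffI)
  fix S' assume "S' \<in> {S. gen15 b (A \<inter> U) (R \<inter> (U \<times> U)) S}"
  then obtain S where "gen15 b A R S" "S \<inter> U = S'" using extend by blast
  then show "S' \<in> (\<lambda>S. S \<inter> U) ` {S. gen15 b A R S}" by blast
next
  fix S' assume "S' \<in> (\<lambda>S. S \<inter> U) ` {S. gen15 b A R S}"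
  then show "S' \<in> {S. gen15 b (A \<inter> U) (R \<inter> (U \<times> U)) S}" using restrict by blast
qed

end

theorem theorem6:
  fixes A :: "'a set" and R :: "('a \<times> 'a) set" and U :: "'a set"
  assumes "R \<subseteq> A \<times> A"
    and "finitary A R"
    and "U \<subseteq> A"
    and "unattacked A R U"
  shows "{S. cf15 (A \<inter> U) (R \<inter> (U \<times> U)) S} = (\<lambda>S. S \<inter> U) ` {S. cf15 A R S} \<and>
         {S. stg15 (A \<inter> U) (R \<inter> (U \<times> U)) S} = (\<lambda>S. S \<inter> U) ` {S. stg15 A R S}"
proof -
  interpret AFU A R U using assms by unfold_locales
  show ?thesis unfolding cf15_gen stg15_gen using directional by blast
qed

end
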